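(* Let $P$ and $P_{\rm n}$ be two inverse demand functions, each continuous and strictly decreasing with a zero, each satisfying (A2) with the same $c$ and $\Theta$. Suppose that for all $q'<q$, $P(q)-P_{\rm n}(q)<P(q')-P_{\rm n}(q')$, and that $P_{\rm n}(P^{-1}(\underline\theta))=\underline\theta$. Let $\mathcal D(P)$ (resp. $\mathcal D(P_{\rm n})$) be the set of deterministic undominated mechanisms when the inverse demand function is $P$ (resp. $P_{\rm n}$). Then $\mathcal D(P_{\rm n})\subseteq\mathcal D(P)$.
   Context: Setting (for a given inverse demand function $P$). Let $\Theta=[\underline\theta,\overline\theta]$ with $0<\underline\theta<\overline\theta$. Let $c>0$ and let $P:\mathbb R_+\to\mathbb R_+$ be continuous and strictly decreasing with $P(\overline q)=0$ for some $\overline q>0$. Put $V(q)=\int_0^q P(z)\,dz$ and $\mathrm{TS}(\theta,q)=V(q)-c-\theta q$ for $q>0$, $\mathrm{TS}(\theta,0)=0$. Assume (A2): $\mathrm{TS}(\overline\theta,P^{-1}(\overline\theta))>0$. A mechanism is a triple $M=(r,q,u)$ of functions $r:\Theta\to[0,1]$, $q:\Theta\to\mathbb R_+$, $u:\Theta\to\mathbb R$ with $q(\theta)=0$ if and only if $r(\theta)=0$. It is IC if $u(\theta)\ge u(\theta')+(\theta'-\theta)q(\theta')r(\theta')$ for all $\theta,\theta'\in\Theta$, and IR if $u(\theta)\ge 0$ for all $\theta$. (Known fact: $M$ is IC iff $\theta\mapsto q(\theta)r(\theta)$ is nonincreasing and $u(\theta)=u(\overline\theta)+\int_\theta^{\overline\theta}q(z)r(z)\,dz$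 for all $\theta$; an IC mechanism is IR iff $u(\overline\theta)\ge0$.) A mechanism is deterministic if $r(\theta)\in\{0,1\}$ for all $\theta$. Fix $\alpha\in[0,1)$. The regulator's surplus at $\theta$ is $\mathrm{RS}_\alpha(\theta,M)=r(\theta)\,\mathrm{TS}(\theta,q(\theta))-(1-\alpha)u(\theta)$ (with $V$, $\mathrm{TS}$ computed from the relevant inverse demand function). An IC and IR mechanism $\tilde M$ dominates an IC and IR mechanism $M$ if $\mathrm{RS}_\alpha(\theta,\tilde M)\ge \mathrm{RS}_\alpha(\theta,M)$ for all $\theta\in\Theta$ with strict inequality for some $\theta$; $M$ is undominated if it is IC, IR and not dominated by any IC and IR mechanism. *)

theory Defs
  imports "HOL-Analysis.Analysis"
begin

definition inv_demand :: "(real \<Rightarrow> real) \<Rightarrow> bool" where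
  "inv_demand P \<longleftrightarrow> continuous_on {0..} P \<and> strict_antimono_on {0..} P
     \<and> (\<exists>qbar>0. P qbar = 0)"

definition Pinv :: "(real \<Rightarrow> real) \<Rightarrow> real \<Rightarrow> real" where
  "Pinv P t = (THE q. q \<ge> 0 \<and> P q = t)"

definition V :: "(real \<Rightarrow> real) \<Rightarrow> real \<Rightarrow> real" where
  "V P q = integral {0..q} P"

definition TS :: "(real \<Rightarrow> real) \<Rightarrow> real \<Rightarrow> real \<Rightarrow> real \<Rightarrow> real" where
  "TS P c \<theta> q = (if q > 0 then V P q - c - \<theta> * q else 0)"

definition A2 :: "(real \<Rightarrow> real) \<Rightarrow> real \<Rightarrow> real \<Rightarrow> bool" where
  "A2 P c thi \<longleftrightarrow> (\<exists>q\<ge>0. P q = thi \<and> TS P c thi q > 0)"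

type_synonym mech = "(real \<Rightarrow> real) \<times> (real \<Rightarrow> real) \<times> (real \<Rightarrow> real)"

definition mechanism :: "real set \<Rightarrow> mech \<Rightarrow> bool" where
  "mechanism \<Theta> M = (case M of (r, q, u) \<Rightarrow>
     (\<forall>\<theta>\<in>\<Theta>. 0 \<le> r \<theta> \<and> r \<theta> \<le> 1 \<and> q \<theta> \<ge> 0 \<and> (q \<theta> = 0 \<longleftrightarrow> r \<theta> = 0)))"

definition IC :: "real set \<Rightarrow> mech \<Rightarrow> bool" where
  "IC \<Theta> M = (case M of (r, q, u) \<Rightarrow>
     (\<forall>\<theta>\<in>\<Theta>. \<forall>\<theta>'\<in>\<Theta>. u \<theta> \<ge> u \<theta>' + (\<theta>' - \<theta>) * q \<theta>' * r \<theta>'))"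

definition IR :: "real set \<Rightarrow> mech \<Rightarrow> bool" where
  "IR \<Theta> M = (case M of (r, q, u) \<Rightarrow> (\<forall>\<theta>\<in>\<Theta>. u \<theta> \<ge> 0))"

definition deterministic :: "real set \<Rightarrow> mech \<Rightarrow> bool" where
  "deterministic \<Theta> M = (case M of (r, q, u) \<Rightarrow> (\<forall>\<theta>\<in>\<Theta>. r \<theta> = 0 \<or> r \<theta> = 1))"

definition RS :: "(real \<Rightarrow> real) \<Rightarrow> real \<Rightarrow> real \<Rightarrow> real \<Rightarrow> mech \<Rightarrow> real" where
  "RS P c \<alpha> \<theta> M = (case M of (r, q, u) \<Rightarrow> r \<theta> * TS P c \<theta> (q \<theta>) - (1 - \<alpha>) * u \<theta>)"

definition admissible :: "real set \<Rightarrow> mech \<Rightarrow> bool" where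
  "admissible \<Theta> M \<longleftrightarrow> mechanism \<Theta> M \<and> IC \<Theta> M \<and> IR \<Theta> M"

definition dominates :: "(real \<Rightarrow> real) \<Rightarrow> real \<Rightarrow> real \<Rightarrow> real set \<Rightarrow> mech \<Rightarrow> mech \<Rightarrow> bool" where
  "dominates P c \<alpha> \<Theta> M' M \<longleftrightarrow> admissible \<Theta> M' \<and> admissible \<Theta> M \<and>
     (\<forall>\<theta>\<in>\<Theta>. RS P c \<alpha> \<theta> M' \<ge> RS P c \<alpha> \<theta> M) \<and> (\<exists>\<theta>\<in>\<Theta>. RS P c \<alpha> \<theta> M' > RS P c \<alpha> \<theta> M)"

definition undominated :: "(real \<Rightarrow> real) \<Rightarrow> real \<Rightarrow> real \<Rightarrow> real set \<Rightarrow> mech \<Rightarrow> bool" where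
  "undominated P c \<alpha> \<Theta> M \<longleftrightarrow> admissible \<Theta> M \<and> \<not> (\<exists>M'. dominates P c \<alpha> \<Theta> M' M)"

definition Dset :: "(real \<Rightarrow> real) \<Rightarrow> real \<Rightarrow> real \<Rightarrow> real set \<Rightarrow> mech set" where
  "Dset P c \<alpha> \<Theta> = {M. deterministic \<Theta> M \<and> undominated P c \<alpha> \<Theta> M}"

end

theory Submission
  imports Defs
begin

lemma inv_demand_D:
  fixes f :: "real \<Rightarrow> real" and x y :: real
  assumes "inv_demand f"
  shows "continuous_on {0..} f" "\<And>x y. 0 \<le> x \<Longrightarrow> x < y \<Longrightarrow> f y < f x"
    "\<exists>qb>0. f qb = 0"
  using assms unfolding inv_demand_def monotone_on_def by auto

lemma V_diff:
  fixes f :: "real \<Rightarrow> real" and x y :: real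
  assumes "continuous_on {0..} f" "0 \<le> x" "x \<le> y"
  shows "V f y - V f x = integral {x..y} f"
proof -
  have "f integrable_on {0..y}"
    apply (rule integrable_continuous_interval)
    using assms by (auto elim: continuous_on_subset)
  note this
  then have "integral {0..x} f + integral {x..y} f = integral {0..y} f"
    using assms by (intro Henstock_Kurzweil_Integration.integral_combine) auto
  then show ?thesis unfolding V_def by simp
qed

lemma int_bounds:
  fixes f :: "real \<Rightarrow> real" and x y :: real
  assumes c: "continuous_on {0..} f" and m: "\<And>x y. 0 \<le> x \<Longrightarrow> x \<le> y \<Longrightarrow> f y \<le> f x"
    and "0 \<le> x" "x \<le> y"
  shows "(y - x) * f y \<le> integral {x..y} f" "integral {x..y} f \<le> (y - x) * f x"
proof -
  have i: "f integrable_on {x..y}"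
    apply (rule integrable_continuous_interval)
    using c assms by (auto elim: continuous_on_subset)
  have "integral {x..y} (\<lambda>z. f y) \<le> integral {x..y} f"
    by (rule integral_le) (use i assms in auto)
  then show "(y - x) * f y \<le> integral {x..y} f" using assms by simp
  have "integral {x..y} f \<le> integral {x..y} (\<lambda>z. f x)"
    by (rule integral_le) (use i assms in auto)
  then show "integral {x..y} f \<le> (y - x) * f x" using assms by simp
qed

lemma V_bounds:
  fixes f :: "real \<Rightarrow> real" and x y :: real
  assumes c: "continuous_on {0..} f" and m: "\<And>x y. 0 \<le> x \<Longrightarrow> x < y \<Longrightarrow> f y < f x"
    and "0 \<le> x" "x \<le> y"
  shows "(y - x) * f y \<le> V f y - V f x" "V f y - V f x \<le> (y - x) * f x"
proof -
  have m': "\<And>x y. 0 \<le> x \<Longrightarrow> x \<le> y \<Longrightarrow> f y \<le> f x"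
    using m by (metis order_le_less order_refl)
  show "(y - x) * f y \<le> V f y - V f x" "V f y - V f x \<le> (y - x) * f x"
    using int_bounds[OF c m' assms(3,4)] V_diff[OF c assms(3,4)] by auto
qed

lemma V_strict:
  fixes f :: "real \<Rightarrow> real" and x y :: real
  assumes c: "continuous_on {0..} f" and m: "\<And>x y. 0 \<le> x \<Longrightarrow> x < y \<Longrightarrow> f y < f x"
    and "0 \<le> x" "x < y"
  shows "(y - x) * f y < V f y - V f x" "V f y - V f x < (y - x) * f x"
proof -
  define z where "z = (x + y) / 2"
  have z: "x < z" "z < y" using assms unfolding z_def by auto
  have a: "(z - x) * f z \<le> V f z - V f x" "V f z - V f x \<le> (z - x) * f x"
    using V_bounds[OF c m, of x z] z assms by auto
  have b: "(y - z) * f y \<le> V f y - V f z" "V f y - V f z \<le> (y - z) * f z"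
    using V_bounds[OF c m, of z y] z assms by auto
  have fz: "f y < f z" "f z < f x" using m z assms by auto
  have "(z - x) * f y < (z - x) * f z" using fz z by simp
  then show "(y - x) * f y < V f y - V f x" using a b by (smt (verit, best) left_diff_distrib)
  have "(y - z) * f z < (y - z) * f x" using fz z by simp
  then show "V f y - V f x < (y - x) * f x" using a b by (smt (verit, best) left_diff_distrib)
qed


lemma IC_antimono:
  fixes u Q :: "real \<Rightarrow> real"
  assumes ic: "\<forall>x\<in>{tlo..thi}. \<forall>y\<in>{tlo..thi}. u x \<ge> u y + (y - x) * Q y"
    and "x \<in> {tlo..thi}" "y \<in> {tlo..thi}" "x \<le> y"
  shows "Q y \<le> Q x" "(y - x) * Q y \<le> u x - u y" "u x - u y \<le> (y - x) * Q x"
proof -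
  have 1: "u x \<ge> u y + (y - x) * Q y" "u y \<ge> u x + (x - y) * Q x" using ic assms by auto
  show "(y - x) * Q y \<le> u x - u y" "u x - u y \<le> (y - x) * Q x" using 1 by (auto simp: algebra_simps)
  show "Q y \<le> Q x"
  proof (cases "x = y")
    case False
    then have "(y - x) * Q y \<le> (y - x) * Q x" using 1 by (auto simp: algebra_simps)
    then show ?thesis using False assms(4) by simp
  qed simp
qed

lemma antimono_integrable:
  fixes Q :: "real \<Rightarrow> real"
  assumes "\<And>x y. x \<in> {a..b} \<Longrightarrow> y \<in> {a..b} \<Longrightarrow> x \<le> y \<Longrightarrow> Q y \<le> Q x"
  shows "Q integrable_on {a..b}"
proof -
  have "mono_on {a..b} (\<lambda>x. - Q x)" using assms by (auto simp: mono_on_def)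
  then have "(\<lambda>x. - Q x) integrable_on {a..b}" by (rule integrable_on_mono_on)
  then show ?thesis using integrable_neg by fastforce
qed

lemma antimono_int_bounds:
  fixes Q :: "real \<Rightarrow> real"
  assumes "\<And>x y. x \<in> {a..b} \<Longrightarrow> y \<in> {a..b} \<Longrightarrow> x \<le> y \<Longrightarrow> Q y \<le> Q x" "a \<le> b"
  shows "(b - a) * Q b \<le> integral {a..b} Q" "integral {a..b} Q \<le> (b - a) * Q a"
proof -
  have i: "Q integrable_on {a..b}" using antimono_integrable assms by blast
  have "integral {a..b} (\<lambda>z. Q b) \<le> integral {a..b} Q"
    by (rule integral_le) (use i assms in auto)
  then show "(b - a) * Q b \<le> integral {a..b} Q" using assms by simp
  have "integral {a..b} Q \<le> integral {a..b} (\<lambda>z. Q a)"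
    by (rule integral_le) (use i assms in auto)
  then show "integral {a..b} Q \<le> (b - a) * Q a" using assms by simp
qed

lemma IC_integral:
  fixes u Q :: "real \<Rightarrow> real"
  assumes ic: "\<forall>x\<in>{tlo..thi}. \<forall>y\<in>{tlo..thi}. u x \<ge> u y + (y - x) * Q y"
    and ab: "tlo \<le> a" "a \<le> b" "b \<le> thi"
  shows "u a - u b = integral {a..b} Q"
proof -
  have mono: "\<And>x y. x \<in> {a..b} \<Longrightarrow> y \<in> {a..b} \<Longrightarrow> x \<le> y \<Longrightarrow> Q y \<le> Q x"
    using IC_antimono(1)[OF ic] ab by auto
  have integ: "Q integrable_on {a..b}" using antimono_integrable mono by blast
  define E where "E c d = u c - u d - integral {c..d} Q" for c d
  have Eb: "\<bar>E c d\<bar> \<le> (d - c) * (Q c - Q d)" if "a \<le> c" "c \<le> d" "d \<le> b" for c d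
  proof -
    have m2: "\<And>x y. x \<in> {c..d} \<Longrightarrow> y \<in> {c..d} \<Longrightarrow> x \<le> y \<Longrightarrow> Q y \<le> Q x"
      using mono that by auto
    have "(d - c) * Q d \<le> integral {c..d} Q" "integral {c..d} Q \<le> (d - c) * Q c"
      using antimono_int_bounds[where a=c and b=d and Q=Q, OF m2] that by auto
    moreover have "(d - c) * Q d \<le> u c - u d" "u c - u d \<le> (d - c) * Q c"
      using IC_antimono[OF ic, of c d] that ab by auto
    ultimately show ?thesis unfolding E_def by (auto simp: algebra_simps abs_le_iff)
  qed
  have Eadd: "E c e = E c d + E d e" if "a \<le> c" "c \<le> d" "d \<le> e" "e \<le> b" for c d e
  proof -
    have "Q integrable_on {c..e}" using integ that
      by (meson integrable_on_subinterval atLeastatMost_subset_iff order_trans)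
    then have "integral {c..d} Q + integral {d..e} Q = integral {c..e} Q"
      using that by (intro Henstock_Kurzweil_Integration.integral_combine) auto
    then show ?thesis unfolding E_def by simp
  qed
  have main: "\<bar>E a b\<bar> \<le> (b - a) / real n * (Q a - Q b)" if n: "n > 0" for n :: nat
  proof -
    define x where "x k = a + real k * (b - a) / real n" for k :: nat
    have x0: "x 0 = a" and xn: "x n = b" using n unfolding x_def by auto
    have xmono: "x k \<le> x (Suc k)" for k using ab n unfolding x_def
      by (simp add: field_simps)
    have xin: "a \<le> x k \<and> x k \<le> b" if "k \<le> n" for k
    proof -
      have "real k * (b - a) \<le> real n * (b - a)" using that ab by (intro mult_right_mono) auto
      moreover have "0 \<le> real k * (b - a)" using ab by simp
      ultimately show ?thesis using ab n unfolding x_def by (auto simp: field_simps)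
    qed
    have step: "x (Suc k) - x k = (b - a) / real n" for k
    proof -
      have "x (Suc k) - x k = ((real k + 1) * (b - a) - real k * (b - a)) / real n"
        unfolding x_def by (simp add: diff_divide_distrib)
      also have "\<dots> = (b - a) / real n" by (simp add: algebra_simps)
      finally show ?thesis .
    qed
    have "\<bar>E a (x k)\<bar> \<le> (b - a) / real n * (Q a - Q (x k))" if "k \<le> n" for k
      using that
    proof (induction k)
      case 0
      then show ?case using x0 unfolding E_def by simp
    next
      case (Suc k)
      have k1: "a \<le> x k" "x k \<le> b" "a \<le> x (Suc k)" "x (Suc k) \<le> b" using xin Suc.prems by auto
      have "E a (x (Suc k)) = E a (x k) + E (x k) (x (Suc k))"
        using Eadd[of a "x k" "x (Suc k)"] k1 xmono[of k] by simp
      moreover have "\<bar>E (x k) (x (Suc k))\<bar> \<le> (b - a) / real n * (Q (x k) - Q (x (Suc k)))"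
        using Eb[of "x k" "x (Suc k)"] k1 xmono[of k] by (simp only: step)
      moreover have "\<bar>E a (x k)\<bar> \<le> (b - a) / real n * (Q a - Q (x k))" using Suc by auto
      moreover have "(b - a) / real n * (Q a - Q (x k)) + (b - a) / real n * (Q (x k) - Q (x (Suc k)))
          = (b - a) / real n * (Q a - Q (x (Suc k)))" by (simp only: distrib_left[symmetric]) simp
      ultimately show ?case by (smt (verit) abs_triangle_ineq)
    qed
    from this[of n] xn show ?thesis by simp
  qed
  have "E a b = 0"
  proof (rule ccontr)
    assume ne: "E a b \<noteq> 0"
    obtain n :: nat where n: "real n > (b - a) * (Q a - Q b) / \<bar>E a b\<bar>"
      using reals_Archimedean2 by blast
    have C: "0 \<le> (b - a) * (Q a - Q b)" using mono ab by auto
    have "0 \<le> (b - a) * (Q a - Q b) / \<bar>E a b\<bar>" using C by simp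
    then have "real n > 0" using n by linarith
    then have npos: "n > 0" by simp
    have "\<bar>E a b\<bar> \<le> (b - a) * (Q a - Q b) / real n" using main[OF npos] by simp
    also have "\<dots> < \<bar>E a b\<bar>" using n ne npos C by (simp add: field_simps)
    finally show False by simp
  qed
  then show ?thesis unfolding E_def by simp
qed


lemma IC_cont:
  fixes u Q :: "real \<Rightarrow> real"
  assumes ic: "\<forall>x\<in>{tlo..thi}. \<forall>y\<in>{tlo..thi}. u x \<ge> u y + (y - x) * Q y"
    and nn: "\<forall>x\<in>{tlo..thi}. Q x \<ge> 0" and "tlo \<le> thi"
  shows "continuous_on {tlo..thi} u"
proof -
  have "(Q tlo)-lipschitz_on {tlo..thi} u"
  proof (rule lipschitz_onI)
    show "0 \<le> Q tlo" using nn assms by auto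
    fix x y assume xy: "x \<in> {tlo..thi}" "y \<in> {tlo..thi}"
    have *: "\<bar>u a - u b\<bar> \<le> Q tlo * \<bar>a - b\<bar>" if "a \<in> {tlo..thi}" "b \<in> {tlo..thi}" "a \<le> b" for a b
    proof -
      have "(b - a) * Q b \<le> u a - u b" "u a - u b \<le> (b - a) * Q a" "Q a \<le> Q tlo"
        using IC_antimono[OF ic, of a b] IC_antimono[OF ic, of tlo a] that by auto
      moreover have "0 \<le> (b - a) * Q b" using nn that by auto
      moreover have "(b - a) * Q a \<le> (b - a) * Q tlo" using \<open>Q a \<le> Q tlo\<close> that by (intro mult_left_mono) auto
      ultimately show ?thesis using that by (auto simp: abs_le_iff algebra_simps)
    qed
    show "dist (u x) (u y) \<le> Q tlo * dist x y"
      using *[of x y] *[of y x] xy unfolding dist_real_def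
      by (cases "x \<le> y") (auto simp: abs_minus_commute)
  qed
  then show ?thesis by (rule lipschitz_on_continuous_on)
qed

lemma IC_Q: "IC S (r, q, u) \<longleftrightarrow> (\<forall>x\<in>S. \<forall>y\<in>S. u x \<ge> u y + (y - x) * (q y * r y))"
  unfolding IC_def by (simp add: mult.assoc)

lemma splice:
  assumes adm: "admissible S (r, q, u)" and th: "\<theta> \<in> S" and a: "0 \<le> a" "a \<le> 1" "0 \<le> b" "(b = 0) = (a = 0)"
    and ic: "\<forall>x\<in>S. u x \<ge> u \<theta> + (\<theta> - x) * (b * a)"
    and gt: "a * TS f c \<theta> b > r \<theta> * TS f c \<theta> (q \<theta>)"
  shows "dominates f c \<alpha> S (r(\<theta>:=a), q(\<theta>:=b), u) (r, q, u)"
proof -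
  have m: "mechanism S (r, q, u)" and i: "IC S (r, q, u)" and ir: "IR S (r, q, u)"
    using adm unfolding admissible_def by auto
  have "mechanism S (r(\<theta>:=a), q(\<theta>:=b), u)" using m a unfolding mechanism_def by auto
  moreover have "IC S (r(\<theta>:=a), q(\<theta>:=b), u)"
    unfolding IC_Q
  proof (intro ballI)
    fix x y assume xy: "x \<in> S" "y \<in> S"
    show "u x \<ge> u y + (y - x) * ((q(\<theta>:=b)) y * (r(\<theta>:=a)) y)"
    proof (cases "y = \<theta>")
      case True then show ?thesis using ic xy by auto
    next
      case False then show ?thesis using i xy unfolding IC_Q by auto
    qed
  qed
  moreover have "IR S (r(\<theta>:=a), q(\<theta>:=b), u)" using ir unfolding IR_def by auto
  ultimately have "admissible S (r(\<theta>:=a), q(\<theta>:=b), u)" unfolding admissible_def by auto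
  moreover have "\<forall>x\<in>S. RS f c \<alpha> x (r(\<theta>:=a), q(\<theta>:=b), u) \<ge> RS f c \<alpha> x (r, q, u)"
    using gt unfolding RS_def by auto
  moreover have "RS f c \<alpha> \<theta> (r(\<theta>:=a), q(\<theta>:=b), u) > RS f c \<alpha> \<theta> (r, q, u)"
    using gt unfolding RS_def by auto
  ultimately show ?thesis using adm th unfolding dominates_def by blast
qed

lemma TS_max:
  fixes f :: "real \<Rightarrow> real"
  assumes c: "continuous_on {0..} f" and m: "\<And>x y. 0 \<le> x \<Longrightarrow> x < y \<Longrightarrow> f y < f x"
    and "0 \<le> z" "0 \<le> x"
  shows "V f x - f z * x \<le> V f z - f z * z"
    "x \<noteq> z \<Longrightarrow> V f x - f z * x < V f z - f z * z"
proof -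
  have s: "V f x - f z * x < V f z - f z * z" if "x \<noteq> z"
  proof (cases "x < z")
    case True
    then have "(z - x) * f z < V f z - V f x" using V_strict[OF c m, of x z] assms by auto
    then show ?thesis by (simp add: algebra_simps)
  next
    case False
    then have "V f x - V f z < (x - z) * f z" using V_strict[OF c m, of z x] assms that by auto
    then show ?thesis by (simp add: algebra_simps)
  qed
  then show "V f x - f z * x \<le> V f z - f z * z" by (cases "x = z") force+
  show "x \<noteq> z \<Longrightarrow> V f x - f z * x < V f z - f z * z" by (rule s)
qed

lemma lim_aux:
  fixes L C K x y :: real
  assumes "x < y" "\<And>a. x < a \<Longrightarrow> a \<le> y \<Longrightarrow> L \<le> (a - x) * C + (y - a) * K"
  shows "L \<le> (y - x) * K"
proof (rule ccontr)
  assume "\<not> ?thesis"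
  then have e: "L - (y - x) * K > 0" by simp
  define a where "a = x + min (y - x) ((L - (y - x) * K) / (\<bar>C - K\<bar> + 1))"
  have a1: "x < a" "a \<le> y" using e assms(1) unfolding a_def by auto
  have "a - x \<le> (L - (y - x) * K) / (\<bar>C - K\<bar> + 1)" unfolding a_def by auto
  then have "(a - x) * (\<bar>C - K\<bar> + 1) \<le> L - (y - x) * K" by (simp add: field_simps)
  moreover have "(a - x) * (C - K) \<le> (a - x) * \<bar>C - K\<bar>" using a1 by (intro mult_left_mono) auto
  moreover have "0 < (a - x)" using a1 by simp
  ultimately have "(a - x) * (C - K) < L - (y - x) * K" by (simp add: algebra_simps)
  moreover have "L \<le> (a - x) * C + (y - a) * K" using assms(2) a1 by auto
  ultimately show False by (simp add: algebra_simps)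
qed

lemma eps_aux:
  fixes A t e :: real
  assumes "e > 0" "\<And>h. 0 < h \<Longrightarrow> h \<le> e \<Longrightarrow> A \<ge> t - h"
  shows "A \<ge> t"
proof (rule ccontr)
  assume n: "\<not> A \<ge> t"
  define m where "m = min e ((t - A) / 2)"
  have m3: "m \<le> (t - A) / 2" unfolding m_def by (rule min.cobounded2)
  have m: "0 < m" "m \<le> e" using assms n unfolding m_def by auto
  have "t - m \<le> A" using assms(2) m by blast
  then show False using m3 n by (simp add: field_simps)
qed


locale S =
  fixes P Pn :: "real \<Rightarrow> real" and c \<alpha> tlo thi :: real
  assumes tlo: "0 < tlo" and tlohi: "tlo < thi" and cpos: "c > 0"
    and a0: "0 \<le> \<alpha>" and a1: "\<alpha> < 1"
    and iP: "inv_demand P" and iPn: "inv_demand Pn"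
    and A2P: "A2 P c thi" and A2Pn: "A2 Pn c thi"
    and dec: "\<And>q q'. 0 \<le> q' \<Longrightarrow> q' < q \<Longrightarrow> P q - Pn q < P q' - Pn q'"
    and hq0: "Pn (Pinv P tlo) = tlo"
begin

lemma contP: "continuous_on {0..} P" and mP: "\<And>x y. 0 \<le> x \<Longrightarrow> x < y \<Longrightarrow> P y < P x"
  and contPn: "continuous_on {0..} Pn" and mPn: "\<And>x y. 0 \<le> x \<Longrightarrow> x < y \<Longrightarrow> Pn y < Pn x"
  using inv_demand_D[OF iP] inv_demand_D[OF iPn] by auto

lemma mP': "0 \<le> x \<Longrightarrow> x \<le> y \<Longrightarrow> P y \<le> P x"
  using mP by (metis order_le_less order_refl)
lemma mPn': "0 \<le> x \<Longrightarrow> x \<le> y \<Longrightarrow> Pn y \<le> Pn x"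
  using mPn by (metis order_le_less order_refl)

definition Df where "Df z = P z - Pn z"

lemma contDf: "continuous_on {0..} Df"
  unfolding Df_def using contP contPn by (intro continuous_intros)
lemma mDf: "0 \<le> x \<Longrightarrow> x < y \<Longrightarrow> Df y < Df x"
  unfolding Df_def using dec by auto

lemma VDf: assumes "0 \<le> x" shows "V Df x = V P x - V Pn x"
proof -
  have "P integrable_on {0..x}" "Pn integrable_on {0..x}"
    using contP contPn assms by (auto intro!: integrable_continuous_interval elim: continuous_on_subset)
  then show ?thesis unfolding V_def Df_def by (simp add: integral_diff)
qed

lemma V0: "V f 0 = 0" unfolding V_def by simp

lemma TS_pos: "x > 0 \<Longrightarrow> TS f c t x = V f x - c - t * x" unfolding TS_def by simp

lemma A2_wit:
  assumes iF: "inv_demand F" and "A2 F c thi"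
  obtains qa where "qa > 0" "F qa = thi" "V F qa - c - thi * qa > 0" "F 0 \<ge> thi"
proof -
  obtain qa where qa: "qa \<ge> 0" "F qa = thi" "TS F c thi qa > 0" using assms unfolding A2_def by auto
  then have "qa > 0" unfolding TS_def by (auto split: if_splits)
  moreover have "F 0 \<ge> thi" using inv_demand_D(2)[OF iF, of 0 qa] qa \<open>qa > 0\<close> by auto
  ultimately show ?thesis using that qa unfolding TS_def by auto
qed

definition q0 where "q0 = Pinv P tlo"

lemma q0: "q0 > 0" "P q0 = tlo" "Pn q0 = tlo"
proof -
  obtain qa where qa: "qa > 0" "P qa = thi" "V P qa - c - thi * qa > 0" "P 0 \<ge> thi"
    by (rule A2_wit[OF iP A2P])
  obtain qb where qb: "qb > 0" "P qb = 0" using inv_demand_D(3)[OF iP] by auto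
  have cb: "continuous_on {0..qb} P" using contP by (rule continuous_on_subset) auto
  have "\<exists>x. 0 \<le> x \<and> x \<le> qb \<and> P x = tlo"
    using IVT2'[of P qb tlo 0, OF _ _ _ cb] qb qa tlo tlohi by simp
  then obtain x where x: "0 \<le> x" "P x = tlo" by auto
  have uniq: "y = x" if "y \<ge> 0" "P y = tlo" for y
  proof (rule ccontr)
    assume "y \<noteq> x"
    then consider "x < y" | "y < x" by linarith
    then show False
    proof cases
      case 1 then show False using mP[of x y] that x by simp
    next
      case 2 then show False using mP[of y x] that x by simp
    qed
  qed
  have "Pinv P tlo = x" unfolding Pinv_def
  proof (rule the_equality)
    show "0 \<le> x \<and> P x = tlo" using x by simp
  next
    fix y assume "0 \<le> y \<and> P y = tlo"
    then show "y = x" using uniq by blast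
  qed
  then have "q0 = x" unfolding q0_def by simp
  then show "P q0 = tlo" using x by simp
  show "Pn q0 = tlo" using hq0 unfolding q0_def .
  have "x \<noteq> 0"
  proof
    assume "x = 0" then have "P 0 = tlo" using x by simp
    then show False using qa(4) tlohi by simp
  qed
  then show "q0 > 0" using \<open>q0 = x\<close> x by simp
qed

lemma Df_q0: "Df q0 = 0" unfolding Df_def using q0 by simp

lemma Df_nonneg: "0 \<le> x \<Longrightarrow> x \<le> q0 \<Longrightarrow> Df x \<ge> 0"
  using mDf[of x q0] Df_q0 by (cases "x = q0") auto

lemma Df_pos: "0 \<le> x \<Longrightarrow> x < q0 \<Longrightarrow> Df x > 0"
  using mDf[of x q0] Df_q0 by auto

lemma D_lower: "0 \<le> x \<Longrightarrow> V Df x \<ge> x * Df x"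
  using V_bounds(1)[OF contDf mDf, of 0 x] V0 by auto

lemma D_nonneg: "0 \<le> x \<Longrightarrow> x \<le> q0 \<Longrightarrow> V Df x \<ge> 0"
proof -
  assume a: "0 \<le> x" "x \<le> q0"
  have "0 \<le> x * Df x" using a Df_nonneg[of x] by simp
  then show ?thesis using D_lower[OF a(1)] by linarith
qed

lemma Pn_le_q0: "0 \<le> x \<Longrightarrow> Pn x \<ge> tlo \<Longrightarrow> x \<le> q0"
proof (rule ccontr)
  assume a: "0 \<le> x" "Pn x \<ge> tlo" "\<not> x \<le> q0"
  then have "Pn x < Pn q0" using mPn[of q0 x] q0 by simp
  then show False using a q0 by simp
qed

lemma Pn_lt_q0: "0 \<le> x \<Longrightarrow> Pn x > tlo \<Longrightarrow> x < q0"
proof (rule ccontr)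
  assume a: "0 \<le> x" "Pn x > tlo" "\<not> x < q0"
  then have "Pn x \<le> Pn q0" using mPn'[of q0 x] q0 by simp
  then show False using a q0 by simp
qed

end


lemma IC_of_integral:
  fixes u Q :: "real \<Rightarrow> real"
  assumes mono: "\<And>x y. x \<in> {tlo..thi} \<Longrightarrow> y \<in> {tlo..thi} \<Longrightarrow> x \<le> y \<Longrightarrow> Q y \<le> Q x"
    and rep: "\<And>x. x \<in> {tlo..thi} \<Longrightarrow> u x = C + integral {x..thi} Q"
  shows "\<forall>x\<in>{tlo..thi}. \<forall>y\<in>{tlo..thi}. u x \<ge> u y + (y - x) * Q y"
proof (intro ballI)
  fix x y assume xy: "x \<in> {tlo..thi}" "y \<in> {tlo..thi}"
  have comb: "integral {a..thi} Q = integral {a..b} Q + integral {b..thi} Q"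
    if "a \<in> {tlo..thi}" "b \<in> {tlo..thi}" "a \<le> b" for a b
  proof -
    have "Q integrable_on {a..thi}" using mono that by (intro antimono_integrable) auto
    then show ?thesis using that by (subst Henstock_Kurzweil_Integration.integral_combine[symmetric]) auto
  qed
  have bnd: "(b - a) * Q b \<le> integral {a..b} Q" "integral {a..b} Q \<le> (b - a) * Q a"
    if "a \<in> {tlo..thi}" "b \<in> {tlo..thi}" "a \<le> b" for a b
    using antimono_int_bounds[where a=a and b=b and Q=Q] mono that by auto
  show "u x \<ge> u y + (y - x) * Q y"
  proof (cases "x \<le> y")
    case True
    then show ?thesis using rep[OF xy(1)] rep[OF xy(2)] comb[OF xy True] bnd[OF xy True] by simp
  next
    case False
    then have yx: "y \<le> x" by simp
    then show ?thesis using rep[OF xy(1)] rep[OF xy(2)] comb[OF xy(2,1) yx] bnd[OF xy(2,1) yx]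
      by (simp add: algebra_simps)
  qed
qed

locale SM = S +
  fixes r q u :: "real \<Rightarrow> real"
  assumes det: "deterministic {tlo..thi} (r, q, u)"
    and und: "undominated Pn c \<alpha> {tlo..thi} (r, q, u)"
begin

abbreviation "\<Theta> \<equiv> {tlo..thi}"

definition Q where "Q x = q x * r x"

lemma adm: "admissible \<Theta> (r, q, u)" using und unfolding undominated_def by auto
lemma notdom: "\<not> dominates Pn c \<alpha> \<Theta> M (r, q, u)" using und unfolding undominated_def by blast

lemma rq: assumes "x \<in> \<Theta>" shows "(r x = 0 \<and> q x = 0) \<or> (r x = 1 \<and> q x > 0)"
proof -
  have "r x = 0 \<or> r x = 1" using det assms unfolding deterministic_def by auto
  moreover have "q x \<ge> 0" "(q x = 0) = (r x = 0)" using adm assms unfolding admissible_def mechanism_def by auto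
  ultimately show ?thesis by auto
qed

lemma Q1: "x \<in> \<Theta> \<Longrightarrow> r x = 1 \<Longrightarrow> Q x = q x" unfolding Q_def by simp
lemma Q0: "x \<in> \<Theta> \<Longrightarrow> r x \<noteq> 1 \<Longrightarrow> Q x = 0 \<and> r x = 0 \<and> q x = 0" unfolding Q_def using rq by auto
lemma Qnn: "x \<in> \<Theta> \<Longrightarrow> Q x \<ge> 0" unfolding Q_def using rq[of x] by auto
lemma Qpos: "x \<in> \<Theta> \<Longrightarrow> Q x > 0 \<Longrightarrow> r x = 1" using Q0 by force

lemma icQ: "\<forall>x\<in>\<Theta>. \<forall>y\<in>\<Theta>. u x \<ge> u y + (y - x) * Q y"
  using adm unfolding admissible_def IC_Q Q_def by auto

lemma Qmono: "x \<in> \<Theta> \<Longrightarrow> y \<in> \<Theta> \<Longrightarrow> x \<le> y \<Longrightarrow> Q y \<le> Q x"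
  using IC_antimono(1)[OF icQ] by blast

lemma IR: "x \<in> \<Theta> \<Longrightarrow> u x \<ge> 0" using adm unfolding admissible_def IR_def by auto

lemma u_thi: "u thi = 0"
proof (rule ccontr)
  assume "u thi \<noteq> 0"
  then have pos: "u thi > 0" using IR[of thi] tlohi by auto
  define M where "M = (r, q, \<lambda>x. u x - u thi)"
  have "mechanism \<Theta> M" using adm unfolding M_def admissible_def mechanism_def by auto
  moreover have "IC \<Theta> M" using adm unfolding M_def admissible_def IC_def by auto
  moreover have "IR \<Theta> M"
  proof -
    have "u x \<ge> u thi" if "x \<in> \<Theta>" for x
    proof -
      have "u x \<ge> u thi + (thi - x) * Q thi" using icQ that tlohi by auto
      moreover have "(thi - x) * Q thi \<ge> 0" using Qnn[of thi] that tlohi by auto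
      ultimately show ?thesis by linarith
    qed
    then show ?thesis unfolding M_def IR_def by auto
  qed
  ultimately have "admissible \<Theta> M" unfolding admissible_def by auto
  moreover have "RS Pn c \<alpha> x M = RS Pn c \<alpha> x (r, q, u) + (1 - \<alpha>) * u thi" for x
    unfolding M_def RS_def by (simp add: algebra_simps)
  moreover have "(1 - \<alpha>) * u thi > 0" using pos a1 by simp
  ultimately have "dominates Pn c \<alpha> \<Theta> M (r, q, u)"
    unfolding dominates_def using adm tlohi by (auto intro!: bexI[of _ thi])
  then show False using notdom by blast
qed

end


context SM begin

lemma C2: assumes x: "x \<in> \<Theta>" and r1: "r x = 1"
  shows "V Pn (q x) - q x * Pn (q x) \<ge> c"
proof (rule ccontr)
  assume "\<not> ?thesis"
  then have lt: "V Pn (q x) - c < q x * Pn (q x)" by simp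
  define z where "z = q x"
  have z: "z > 0" using rq[OF x] r1 unfolding z_def by auto
  define K where "K = (V Pn z - c) / z"
  have K: "K < Pn z" using lt z unfolding K_def z_def by (simp add: field_simps)
  obtain d where d: "d > 0" "\<And>y. y \<in> {0..} \<Longrightarrow> dist y z < d \<Longrightarrow> dist (Pn y) (Pn z) < Pn z - K"
    using contPn z K unfolding continuous_on_iff by (metis atLeast_iff less_eq_real_def diff_gt_0_iff_gt)
  define h where "h = d / 2"
  have h: "h > 0" "dist (z + h) z < d" using d unfolding h_def dist_real_def by auto
  then have "dist (Pn (z + h)) (Pn z) < Pn z - K" using d(2)[of "z + h"] z by auto
  then have PK: "Pn (z + h) > K" unfolding dist_real_def by auto
  define b where "b = z + h"
  define a where "a = z / b"
  have b: "b > 0" "a > 0" "a \<le> 1" "b * a = z" using z h unfolding a_def b_def by auto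
  have Vb: "h * Pn b \<le> V Pn b - V Pn z" using V_bounds(1)[OF contPn mPn, of z b] z h unfolding b_def by auto
  have "z * K < z * Pn b" using PK z unfolding b_def by simp
  then have "V Pn z - c < z * Pn b" unfolding K_def using z by simp
  then have "h * (V Pn z - c) < h * (z * Pn b)" using h by simp
  also have "\<dots> \<le> z * (V Pn b - V Pn z)" using Vb z by (simp add: mult.left_commute mult_left_mono)
  finally have "b * (V Pn z - c) < z * (V Pn b - c)" unfolding b_def by (simp add: algebra_simps)
  then have "V Pn z - c < a * (V Pn b - c)" using b unfolding a_def by (simp add: field_simps)
  moreover have abx: "a * (b * x) = x * z" using b(4) by (metis mult.assoc mult.commute)
  have e1: "a * TS Pn c x b = a * (V Pn b - c) - x * z"
  proof -
    have "a * TS Pn c x b = a * (V Pn b - c) - a * (b * x)" using b(1) unfolding TS_def by (simp add: algebra_simps)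
    then show ?thesis using abx by simp
  qed
  have e2: "r x * TS Pn c x (q x) = V Pn z - c - x * z" using r1 z unfolding TS_def z_def by simp
  have gt: "a * TS Pn c x b > r x * TS Pn c x (q x)" unfolding e1 e2 using calculation by linarith
  have ic: "\<forall>y\<in>\<Theta>. u y \<ge> u x + (x - y) * (b * a)"
  proof
    fix y assume "y \<in> \<Theta>"
    then have "u y \<ge> u x + (x - y) * Q x" using icQ x by blast
    then show "u y \<ge> u x + (x - y) * (b * a)" using b(4) Q1[OF x r1] unfolding z_def by simp
  qed
  have "dominates Pn c \<alpha> \<Theta> (r(x:=a), q(x:=b), u) (r, q, u)"
    by (rule splice[OF adm x _ _ _ _ ic gt]) (use b in auto)
  then show False using notdom by blast
qed

end

context SM begin

lemma Q_int: "a \<in> \<Theta> \<Longrightarrow> b \<in> \<Theta> \<Longrightarrow> a \<le> b \<Longrightarrow> u a - u b = integral {a..b} Q"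
  using IC_integral[OF icQ] by auto

lemma C1: assumes x0: "t0 \<in> \<Theta>" and r1: "r t0 = 1"
  shows "Pn (q t0) \<ge> t0"
proof (rule ccontr)
  assume "\<not> ?thesis"
  then have lt: "Pn (q t0) < t0" by simp
  define z where "z = q t0"
  have z: "z > 0" using rq[OF x0] r1 unfolding z_def by auto
  obtain d where d: "d > 0" "\<And>y. y \<in> {0..} \<Longrightarrow> dist y z < d \<Longrightarrow> dist (Pn y) (Pn z) < t0 - Pn z"
    using contPn z lt unfolding continuous_on_iff z_def by (metis atLeast_iff less_eq_real_def diff_gt_0_iff_gt)
  define qh where "qh = max (z / 2) (z - d / 2)"
  have qh: "qh > 0" "qh < z" "dist qh z < d" using z d unfolding qh_def dist_real_def by auto
  then have "dist (Pn qh) (Pn z) < t0 - Pn z" using d(2)[of qh] by auto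
  then have Pqh: "Pn qh < t0" unfolding dist_real_def by auto
  define q' where "q' y = (if y < t0 then q y else min (q y) qh)" for y
  define Q' where "Q' y = q' y * r y" for y
  have Q'Q: "Q' y \<le> Q y" "Q' y \<ge> 0" if "y \<in> \<Theta>" for y
    using rq[OF that] qh unfolding Q'_def Q_def q'_def by auto
  have Q'mono: "Q' y \<le> Q' x" if "x \<in> \<Theta>" "y \<in> \<Theta>" "x \<le> y" for x y
  proof -
    have QQ: "Q y \<le> Q x" using Qmono that by auto
    show ?thesis
    proof (cases "y < t0")
      case True
      then have "x < t0" using that by auto
      then show ?thesis using True QQ unfolding Q'_def Q_def q'_def by auto
    next
      case False
      note yF = False
      show ?thesis
      proof (cases "x < t0")
        case True
        have "Q t0 \<le> Q x" using Qmono that x0 True by auto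
        then have "z \<le> Q x" using Q1[OF x0 r1] unfolding z_def by simp
        moreover have "Q' y \<le> qh" using rq[OF that(2)] qh unfolding Q'_def q'_def using yF by auto
        ultimately show ?thesis using qh True unfolding Q'_def q'_def Q_def by auto
      next
        case False
        then show ?thesis using yF QQ rq[OF that(1)] rq[OF that(2)] qh unfolding Q'_def Q_def q'_def
          by (auto simp: min_def)
      qed
    qed
  qed
  have intQ: "Q integrable_on {a..b}" if "a \<in> \<Theta>" "b \<in> \<Theta>" for a b
    using Qmono that by (intro antimono_integrable) auto
  have intQ': "Q' integrable_on {a..b}" if "a \<in> \<Theta>" "b \<in> \<Theta>" for a b
    using Q'mono that by (intro antimono_integrable) auto
  define u' where "u' y = u y - integral {y..thi} (\<lambda>w. Q w - Q' w)" for y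
  have diffnn: "integral {y..thi} (\<lambda>w. Q w - Q' w) \<ge> 0" if "y \<in> \<Theta>" for y
    by (rule integral_nonneg) (use intQ intQ' that Q'Q in \<open>auto intro!: integrable_diff\<close>)
  have rep: "u' y = 0 + integral {y..thi} Q'" if "y \<in> \<Theta>" for y
  proof -
    have "u y = integral {y..thi} Q" using Q_int[OF that, of thi] u_thi that by auto
    then show ?thesis unfolding u'_def using intQ intQ' that tlohi
      by (subst integral_diff) auto
  qed
  define M where "M = (r, q', u')"
  have "mechanism \<Theta> M" unfolding M_def mechanism_def
  proof (simp, intro ballI)
    fix y assume y: "y \<in> \<Theta>"
    show "0 \<le> r y \<and> r y \<le> 1 \<and> 0 \<le> q' y \<and> (q' y = 0) = (r y = 0)"
      using rq[OF y] qh unfolding q'_def by (cases "y < t0") (auto simp: min_def)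
  qed
  moreover have "IC \<Theta> M" unfolding M_def IC_Q using IC_of_integral[OF Q'mono rep] unfolding Q'_def by auto
  moreover have "IR \<Theta> M" unfolding M_def IR_def
  proof (simp, intro ballI)
    fix y assume y: "y \<in> \<Theta>"
    have "Q' w \<ge> 0" if "w \<in> {y..thi}" for w using Q'Q[of w] that y by auto
    moreover have "Q' integrable_on {y..thi}" using intQ'[of y thi] y tlohi by auto
    ultimately have "0 \<le> integral {y..thi} Q'" by (intro integral_nonneg) auto
    then show "0 \<le> u' y" unfolding rep[OF y] by simp
  qed
  ultimately have admM: "admissible \<Theta> M" unfolding admissible_def by auto
  have TSgain: "r y * TS Pn c y (q' y) \<ge> r y * TS Pn c y (q y)"
    "y = t0 \<Longrightarrow> r y * TS Pn c y (q' y) > r y * TS Pn c y (q y)" if y: "y \<in> \<Theta>" for y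
  proof -
    have strict: "TS Pn c y qh > TS Pn c y (q y)" if "t0 \<le> y" "qh < q y"
    proof -
      have "V Pn (q y) - V Pn qh \<le> (q y - qh) * Pn qh" using V_bounds(2)[OF contPn mPn, of qh "q y"] qh that by auto
      moreover have "(q y - qh) * Pn qh < (q y - qh) * y" using that Pqh by (intro mult_strict_left_mono) auto
      ultimately show ?thesis unfolding TS_def using qh that by (simp add: algebra_simps)
    qed
    show "r y * TS Pn c y (q' y) \<ge> r y * TS Pn c y (q y)"
    proof (cases "y < t0 \<or> q y \<le> qh")
      case True
      then have "q' y = q y" unfolding q'_def by auto
      then show ?thesis by simp
    next
      case False
      then have "q' y = qh" "t0 \<le> y" "qh < q y" unfolding q'_def by auto
      then show ?thesis using strict rq[OF y] by (auto simp: less_eq_real_def)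
    qed
    show "y = t0 \<Longrightarrow> r y * TS Pn c y (q' y) > r y * TS Pn c y (q y)"
      using strict[of] r1 qh unfolding q'_def z_def by (auto simp: min_def)
  qed
  have RSge: "RS Pn c \<alpha> y M \<ge> RS Pn c \<alpha> y (r, q, u)" "y = t0 \<Longrightarrow> RS Pn c \<alpha> y M > RS Pn c \<alpha> y (r, q, u)"
    if y: "y \<in> \<Theta>" for y
  proof -
    have "(1 - \<alpha>) * u' y \<le> (1 - \<alpha>) * u y" using diffnn[OF y] a1 unfolding u'_def by simp
    then show "RS Pn c \<alpha> y M \<ge> RS Pn c \<alpha> y (r, q, u)" "y = t0 \<Longrightarrow> RS Pn c \<alpha> y M > RS Pn c \<alpha> y (r, q, u)"
      using TSgain[OF y] unfolding RS_def M_def by auto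
  qed
  have "dominates Pn c \<alpha> \<Theta> M (r, q, u)"
    unfolding dominates_def using admM adm RSge x0 by blast
  then show False using notdom by blast
qed

end

context S begin

lemma TS_q0_max:
  assumes iF: "inv_demand F" and A: "A2 F c thi" and Fq0: "F q0 = tlo" and x: "x > 0"
  shows "TS F c tlo x \<le> TS F c tlo q0" "x \<noteq> q0 \<Longrightarrow> TS F c tlo x < TS F c tlo q0"
proof -
  note cF = inv_demand_D(1)[OF iF] and mF = inv_demand_D(2)[OF iF]
  have m: "V F x - F q0 * x \<le> V F q0 - F q0 * q0" "x \<noteq> q0 \<Longrightarrow> V F x - F q0 * x < V F q0 - F q0 * q0"
    using TS_max[OF cF mF, of q0 x] q0 x by auto
  then show "TS F c tlo x \<le> TS F c tlo q0" "x \<noteq> q0 \<Longrightarrow> TS F c tlo x < TS F c tlo q0"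
    using x q0 Fq0 unfolding TS_def by auto
qed

lemma TS_q0_pos:
  assumes iF: "inv_demand F" and A: "A2 F c thi" and Fq0: "F q0 = tlo"
  shows "TS F c tlo q0 > 0"
proof -
  note cF = inv_demand_D(1)[OF iF] and mF = inv_demand_D(2)[OF iF]
  obtain qa where qa: "qa > 0" "F qa = thi" "V F qa - c - thi * qa > 0" by (rule A2_wit[OF iF A])
  have "V F qa - F q0 * qa \<le> V F q0 - F q0 * q0" using TS_max(1)[OF cF mF, of q0 qa] q0 qa by auto
  then have 1: "V F qa - tlo * qa \<le> V F q0 - tlo * q0" unfolding Fq0 .
  have 2: "tlo * qa \<le> thi * qa" using tlohi qa by simp
  have "V F q0 - c - tlo * q0 > 0" using 1 2 qa(3) by linarith
  then show "TS F c tlo q0 > 0" using q0 unfolding TS_def by auto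
qed

end

context SM begin

lemma Q_lt_q0: assumes "a \<in> \<Theta>" "a > tlo" shows "Q a < q0"
proof (cases "r a = 1")
  case True
  then have "Pn (q a) \<ge> a" using C1 assms by auto
  then have "q a < q0" using Pn_lt_q0[of "q a"] rq[OF assms(1)] assms by auto
  then show ?thesis using Q1 True assms by simp
next
  case False then show ?thesis using Q0 assms q0 by simp
qed

lemma C3: "r tlo = 1 \<and> q tlo = q0"
proof (rule ccontr)
  assume ne: "\<not> ?thesis"
  have t: "tlo \<in> \<Theta>" using tlohi by simp
  have ic: "\<forall>x\<in>\<Theta>. u x \<ge> u tlo + (tlo - x) * (q0 * 1)"
  proof
    fix x assume x: "x \<in> \<Theta>"
    show "u x \<ge> u tlo + (tlo - x) * (q0 * 1)"
    proof (cases "x = tlo")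
      case False
      then have xt: "tlo < x" using x by simp
      have "u tlo - u x \<le> (x - tlo) * q0"
      proof (rule lim_aux[OF xt])
        fix a assume a: "tlo < a" "a \<le> x"
        then have aT: "a \<in> \<Theta>" using x by auto
        have "u tlo - u a \<le> (a - tlo) * Q tlo" using IC_antimono(3)[OF icQ t aT] a by simp
        moreover have "u a - u x \<le> (x - a) * Q a" using IC_antimono(3)[OF icQ aT x] a by simp
        moreover have "(x - a) * Q a \<le> (x - a) * q0" using Q_lt_q0[OF aT] a by (intro mult_left_mono) auto
        ultimately show "u tlo - u x \<le> (a - tlo) * Q tlo + (x - a) * q0" by linarith
      qed
      then show ?thesis by (simp add: algebra_simps)
    qed simp
  qed
  have gt: "1 * TS Pn c tlo q0 > r tlo * TS Pn c tlo (q tlo)"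
    using rq[OF t] ne TS_q0_max[OF iPn A2Pn q0(3), of "q tlo"] TS_q0_pos[OF iPn A2Pn q0(3)] by auto
  have "dominates Pn c \<alpha> \<Theta> (r(tlo:=1), q(tlo:=q0), u) (r, q, u)"
    by (rule splice[OF adm t _ _ _ _ ic gt]) (use q0 in auto)
  then show False using notdom by blast
qed

end

locale SMD = SM +
  fixes r' q' u' :: "real \<Rightarrow> real"
  assumes dom: "dominates P c \<alpha> {tlo..thi} (r', q', u') (r, q, u)"
begin

definition Q' where "Q' x = q' x * r' x"
definition H where "H x = u' x - u x"
definition Phi' where "Phi' x = r' x * TS P c x (q' x)"
definition Phi where "Phi x = r x * TS P c x (q x)"

lemma adm': "admissible \<Theta> (r', q', u')" using dom unfolding dominates_def by auto

lemma mech': assumes "x \<in> \<Theta>" shows "0 \<le> r' x" "r' x \<le> 1" "0 \<le> q' x" "(q' x = 0) = (r' x = 0)"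
  using adm' assms unfolding admissible_def mechanism_def by auto

lemma Q'nn: "x \<in> \<Theta> \<Longrightarrow> Q' x \<ge> 0" unfolding Q'_def using mech' by simp

lemma icQ': "\<forall>x\<in>\<Theta>. \<forall>y\<in>\<Theta>. u' x \<ge> u' y + (y - x) * Q' y"
  using adm' unfolding admissible_def IC_Q Q'_def by auto

lemma Q'mono: "x \<in> \<Theta> \<Longrightarrow> y \<in> \<Theta> \<Longrightarrow> x \<le> y \<Longrightarrow> Q' y \<le> Q' x"
  using IC_antimono(1)[OF icQ'] by blast

lemma IR': "x \<in> \<Theta> \<Longrightarrow> u' x \<ge> 0" using adm' unfolding admissible_def IR_def by auto

lemma key: "x \<in> \<Theta> \<Longrightarrow> (1 - \<alpha>) * H x \<le> Phi' x - Phi x"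
  using dom unfolding dominates_def RS_def Phi'_def Phi_def H_def by (auto simp: algebra_simps)

lemma strictpt: obtains x where "x \<in> \<Theta>" "Phi' x - (1 - \<alpha>) * u' x > Phi x - (1 - \<alpha>) * u x"
  using dom unfolding dominates_def RS_def Phi'_def Phi_def by auto

lemma Hrep: "a \<in> \<Theta> \<Longrightarrow> b \<in> \<Theta> \<Longrightarrow> a \<le> b \<Longrightarrow> H a - H b = integral {a..b} (\<lambda>z. Q' z - Q z)"
proof -
  assume ab: "a \<in> \<Theta>" "b \<in> \<Theta>" "a \<le> b"
  have "Q' integrable_on {a..b}" "Q integrable_on {a..b}"
    using Q'mono Qmono ab by (auto intro!: antimono_integrable)
  moreover have "u' a - u' b = integral {a..b} Q'" using IC_integral[OF icQ'] ab by auto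
  moreover have "u a - u b = integral {a..b} Q" using Q_int ab by auto
  ultimately show ?thesis unfolding H_def by (simp add: integral_diff)
qed

lemma Hcont: "continuous_on \<Theta> H"
proof -
  have "continuous_on \<Theta> u'" using IC_cont[OF icQ'] Q'nn tlohi by auto
  moreover have "continuous_on \<Theta> u" using IC_cont[OF icQ] Qnn tlohi by auto
  ultimately show ?thesis unfolding H_def by (intro continuous_intros)
qed

lemma GP: assumes x: "x \<in> \<Theta>" and r1: "r x = 1" shows "V P (q x) - q x * P (q x) \<ge> c"
proof -
  have z: "q x > 0" using rq[OF x] r1 by auto
  have "V Df (q x) \<ge> q x * Df (q x)" using D_lower z by auto
  then have "V P (q x) - V Pn (q x) \<ge> q x * (P (q x) - Pn (q x))" using VDf[of "q x"] z unfolding Df_def by auto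
  then show ?thesis using C2[OF x r1] by (simp add: algebra_simps)
qed

lemma wlow: assumes x: "x \<in> \<Theta>" and r1: "r x = 1" shows "P (q x) - x \<ge> Df (q x)" "Df (q x) \<ge> 0"
proof -
  have z: "q x > 0" using rq[OF x] r1 by auto
  have Pn: "Pn (q x) \<ge> x" using C1[OF x r1] .
  then show "P (q x) - x \<ge> Df (q x)" unfolding Df_def by simp
  have "q x \<le> q0" using Pn_le_q0[of "q x"] Pn x z by auto
  then show "Df (q x) \<ge> 0" using Df_nonneg z by auto
qed

lemma lin: assumes x: "x \<in> \<Theta>" and r1: "r x = 1"
  shows "Phi' x - Phi x \<le> (P (q x) - x) * (Q' x - Q x)"
proof -
  define z where "z = q x"
  have z: "z > 0" using rq[OF x] r1 unfolding z_def by auto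
  have G: "V P z - z * P z \<ge> c" using GP[OF x r1] unfolding z_def .
  have Phi: "Phi x = V P z - c - x * z" unfolding Phi_def z_def using r1 z unfolding TS_def z_def by simp
  have Qx: "Q x = z" using Q1[OF x r1] unfolding z_def .
  show ?thesis
  proof (cases "r' x = 0")
    case True
    then have "Phi' x = 0" "Q' x = 0" unfolding Phi'_def Q'_def by auto
    then show ?thesis unfolding Phi Qx z_def[symmetric] using G by (simp add: algebra_simps)
  next
    case False
    define \<rho> where "\<rho> = r' x"
    define y where "y = q' x"
    have \<rho>: "0 < \<rho>" "\<rho> \<le> 1" using mech'[OF x] False unfolding \<rho>_def by auto
    have y: "y > 0" using mech'[OF x] False unfolding y_def by auto
    have Phi': "Phi' x = \<rho> * (V P y - c - x * y)" unfolding Phi'_def \<rho>_def y_def using y unfolding TS_def y_def by simp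
    have Q'x: "Q' x = y * \<rho>" unfolding Q'_def y_def \<rho>_def ..
    have conc: "V P y \<le> V P z + P z * (y - z)"
    proof (cases "z \<le> y")
      case True
      then show ?thesis using V_bounds(2)[OF contP mP, of z y] z by (simp add: algebra_simps)
    next
      case False
      then show ?thesis using V_bounds(1)[OF contP mP, of y z] y by (simp add: algebra_simps)
    qed
    have c1: "\<rho> * V P y \<le> \<rho> * (V P z + P z * (y - z))" using conc \<rho> by (intro mult_left_mono) auto
    have c2: "0 \<le> (1 - \<rho>) * (V P z - c - z * P z)" using G \<rho> by (intro mult_nonneg_nonneg) auto
    have eq: "Phi' x - Phi x - (P z - x) * (Q' x - Q x)
        = (\<rho> * V P y - \<rho> * (V P z + P z * (y - z))) - (1 - \<rho>) * (V P z - c - z * P z)"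
      unfolding Phi' Phi Q'x Qx by (simp add: algebra_simps)
    show ?thesis using eq c1 c2 unfolding z_def[symmetric] by linarith
  qed
qed

lemma part0: "Phi' tlo \<le> Phi tlo" "H tlo \<le> 0"
proof -
  have t: "tlo \<in> \<Theta>" using tlohi by simp
  have Phi: "Phi tlo = TS P c tlo q0" using C3 unfolding Phi_def by simp
  have pos: "TS P c tlo q0 > 0" using TS_q0_pos[OF iP A2P q0(2)] .
  show "Phi' tlo \<le> Phi tlo"
  proof (cases "r' tlo = 0")
    case True then show ?thesis unfolding Phi'_def Phi using pos by simp
  next
    case False
    then have y: "q' tlo > 0" "0 < r' tlo" "r' tlo \<le> 1" using mech'[OF t] by auto
    have "TS P c tlo (q' tlo) \<le> TS P c tlo q0" using TS_q0_max(1)[OF iP A2P q0(2) y(1)] .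
    then have "r' tlo * TS P c tlo (q' tlo) \<le> r' tlo * TS P c tlo q0" using y by (intro mult_left_mono) auto
    also have "\<dots> \<le> TS P c tlo q0" using y pos by (simp add: mult_le_cancel_right1)
    finally show ?thesis unfolding Phi'_def Phi .
  qed
  then have "(1 - \<alpha>) * H tlo \<le> 0" using key[OF t] by linarith
  then show "H tlo \<le> 0" using a1 by (simp add: mult_le_0_iff)
qed

end

context SMD begin

lemma d_nonneg_of_Hpos: assumes z: "z \<in> \<Theta>" and Hp: "H z > 0" shows "Q' z - Q z \<ge> 0"
proof (cases "r z = 1")
  case True
  have "(1 - \<alpha>) * H z > 0" using Hp a1 by simp
  then have "0 < (P (q z) - z) * (Q' z - Q z)" using key[OF z] lin[OF z True] by linarith
  moreover have "P (q z) - z \<ge> 0" using wlow[OF z True] by linarith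
  ultimately show ?thesis by (auto simp: zero_less_mult_iff)
next
  case False
  then show ?thesis using Q0[OF z] Q'nn[OF z] by simp
qed

lemma part1: assumes x: "x \<in> \<Theta>" shows "H x \<le> 0"
proof (rule ccontr)
  assume "\<not> H x \<le> 0"
  then have Hx: "H x > 0" by simp
  then have xt: "tlo < x" using part0 x by (cases "x = tlo") auto
  define S where "S = {s \<in> {tlo..x}. H s \<le> 0}"
  have contS: "continuous_on {tlo..x} H" using Hcont by (rule continuous_on_subset) (use x in auto)
  have clS: "closed S" unfolding S_def
    using continuous_on_closed_Collect_le[OF contS continuous_on_const[of _ 0]] by simp
  have neS: "tlo \<in> S" unfolding S_def using part0 xt by auto
  have bdd: "bdd_above S" unfolding S_def by (rule bdd_aboveI[of _ x]) auto
  define s0 where "s0 = Sup S"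
  have s0S: "s0 \<in> S" unfolding s0_def using closed_contains_Sup[OF _ bdd clS] neS by blast
  then have s0: "tlo \<le> s0" "s0 \<le> x" "H s0 \<le> 0" unfolding S_def by auto
  have s0x: "s0 < x" using s0 Hx by (cases "s0 = x") auto
  have posH: "H a > 0" if "s0 < a" "a \<le> x" for a
  proof (rule ccontr)
    assume "\<not> H a > 0"
    then have "a \<in> S" unfolding S_def using that s0 by auto
    then have "a \<le> s0" unfolding s0_def using bdd by (rule cSup_upper)
    then show False using that by simp
  qed
  have ge: "H a \<ge> H x" if "s0 < a" "a \<le> x" for a
  proof -
    have aT: "a \<in> \<Theta>" using that s0 x by auto
    have "integral {a..x} (\<lambda>z. Q' z - Q z) \<ge> 0"
    proof (rule integral_nonneg)
      have "Q' integrable_on {a..x}" "Q integrable_on {a..x}"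
        using Q'mono Qmono aT x that by (auto intro!: antimono_integrable)
      then show "(\<lambda>z. Q' z - Q z) integrable_on {a..x}" by (rule integrable_diff)
      fix z assume "z \<in> {a..x}"
      then have "z \<in> \<Theta>" "H z > 0" using posH[of z] that aT x by auto
      then show "0 \<le> Q' z - Q z" using d_nonneg_of_Hpos by blast
    qed
    then show ?thesis using Hrep[OF aT x] that by simp
  qed
  define T where "T = {a \<in> {s0..x}. H x \<le> H a}"
  have contT: "continuous_on {s0..x} H" using Hcont by (rule continuous_on_subset) (use s0 x in auto)
  have clT: "closed T" unfolding T_def
    using continuous_on_closed_Collect_le[OF continuous_on_const[of _ "H x"] contT] by simp
  have "{s0<..x} \<subseteq> T" unfolding T_def using ge by auto
  then have "closure {s0<..x} \<subseteq> T" using clT by (rule closure_minimal)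
  then have "s0 \<in> T" using s0x by auto
  then show False unfolding T_def using s0 Hx by auto
qed

lemma Hthi: "H thi = 0"
  using part1[of thi] IR'[of thi] u_thi tlohi unfolding H_def by auto

end

context SMD begin

lemma part2_inner: assumes x1: "x1 \<in> \<Theta>" "tlo < x1" shows "H x1 = 0"
proof (rule ccontr)
  assume "H x1 \<noteq> 0"
  then have Hx1: "H x1 < 0" using part1[OF x1(1)] by simp
  define Z where "Z = {x \<in> {x1..thi}. H x = 0}"
  have contZ: "continuous_on {x1..thi} H" using Hcont by (rule continuous_on_subset) (use x1 in auto)
  have clZ: "closed Z" unfolding Z_def by (rule continuous_closed_preimage_constant[OF contZ]) simp
  have thiZ: "thi \<in> Z" unfolding Z_def using Hthi x1 by auto
  have bddZ: "bdd_below Z" unfolding Z_def by (rule bdd_belowI[of _ x1]) auto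
  define x2 where "x2 = Inf Z"
  have x2Z: "x2 \<in> Z" unfolding x2_def using closed_contains_Inf[OF _ bddZ clZ] thiZ by blast
  then have x2: "x1 \<le> x2" "x2 \<le> thi" "H x2 = 0" unfolding Z_def by auto
  have x12: "x1 < x2" using x2 Hx1 by (cases "x1 = x2") auto
  have neg: "H y < 0" if "x1 \<le> y" "y < x2" for y
  proof (rule ccontr)
    assume "\<not> H y < 0"
    then have "H y = 0" using part1[of y] that x2 x1 by force
    then have "y \<in> Z" unfolding Z_def using that x2 by auto
    then have "x2 \<le> y" unfolding x2_def using bddZ by (rule cInf_lower)
    then show False using that by simp
  qed
  define g where "g = (if r x1 = 1 then Df (q x1) else 1)"
  have gpos: "g > 0"
  proof (cases "r x1 = 1")
    case True
    then have "q x1 < q0" "0 < q x1" using Q_lt_q0[OF x1] Q1[OF x1(1) True] rq[OF x1(1)] by auto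
    then show ?thesis using True Df_pos unfolding g_def by auto
  qed (simp add: g_def)
  define k where "k = (1 - \<alpha>) / g"
  have kpos: "k > 0" unfolding k_def using gpos a1 by simp
  have dlow: "Q' z - Q z \<ge> - (k * m)" if z: "z \<in> {x1..thi}" and m: "m \<ge> 0" "H z \<ge> - m" for z m
  proof (cases "r z = 1")
    case False
    have "0 \<le> k * m" using kpos m by simp
    then show ?thesis using Q0[of z] Q'nn[of z] z x1 False by auto
  next
    case True
    have zT: "z \<in> \<Theta>" using z x1 by auto
    have Qz: "0 < Q z" using Q1[OF zT True] rq[OF zT] True by auto
    have "Q z \<le> Q x1" using Qmono[of x1 z] z x1 by auto
    then have rx1: "r x1 = 1" using Qpos[OF x1(1)] Qz by auto
    have qq: "q z \<le> q x1" using Q1[OF zT True] Q1[OF x1(1) rx1] \<open>Q z \<le> Q x1\<close> by simp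
    have "Df (q x1) \<le> Df (q z)"
      using mDf[of "q z" "q x1"] qq Qz Q1[OF zT True] by (cases "q z = q x1") auto
    then have wg: "P (q z) - z \<ge> g" using wlow(1)[OF zT True] rx1 unfolding g_def by simp
    show ?thesis
    proof (cases "Q' z - Q z \<ge> 0")
      case True
      have "0 \<le> k * m" using kpos m by simp
      then show ?thesis using True by linarith
    next
      case False
      define d where "d = Q' z - Q z"
      have dneg: "d < 0" using False unfolding d_def by simp
      have "(1 - \<alpha>) * H z \<le> (P (q z) - z) * d" using key[OF zT] lin[OF zT True] unfolding d_def by linarith
      moreover have "(P (q z) - z) * d \<le> g * d" using wg dneg by (intro mult_right_mono_neg) auto
      moreover have "(1 - \<alpha>) * H z \<ge> (1 - \<alpha>) * (- m)" using m a1 by (intro mult_left_mono) auto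
      ultimately have "g * d \<ge> - ((1 - \<alpha>) * m)" by simp
      then have "d \<ge> - ((1 - \<alpha>) * m) / g" using gpos by (simp add: field_simps)
      moreover have "- (k * m) = - ((1 - \<alpha>) * m) / g" unfolding k_def by simp
      ultimately show ?thesis unfolding d_def by linarith
    qed
  qed
  define \<delta> where "\<delta> = 1 / (2 * k)"
  have \<delta>: "\<delta> > 0" "\<delta> * k = 1 / 2" unfolding \<delta>_def using kpos by auto
  define x3 where "x3 = max x1 (x2 - \<delta>)"
  have x3: "x1 \<le> x3" "x3 < x2" "x2 - x3 \<le> \<delta>" unfolding x3_def using x12 \<delta> by auto
  have "\<exists>s\<in>{x3..x2}. \<forall>y\<in>{x3..x2}. - H y \<le> - H s"
    by (rule continuous_attains_sup) (use x3 Hcont x1 x2 in \<open>auto intro!: continuous_intros elim!: continuous_on_subset\<close>)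
  then obtain s where s: "s \<in> {x3..x2}" and smax: "\<And>y. y \<in> {x3..x2} \<Longrightarrow> - H y \<le> - H s" by auto
  define m where "m = - H s"
  have mpos: "m > 0" using smax[of x3] neg[of x3] x3 unfolding m_def by auto
  have sT: "s \<in> \<Theta>" "x2 \<in> \<Theta>" using s x1 x3 x2 by auto
  have "integral {s..x2} (\<lambda>z. - (k * m)) \<le> integral {s..x2} (\<lambda>z. Q' z - Q z)"
  proof (rule integral_le)
    show "(\<lambda>z. - (k * m)) integrable_on {s..x2}" by (rule integrable_const_ivl)
    have "Q' integrable_on {s..x2}" "Q integrable_on {s..x2}"
      using Q'mono Qmono sT s by (auto intro!: antimono_integrable)
    then show "(\<lambda>z. Q' z - Q z) integrable_on {s..x2}" by (rule integrable_diff)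
    fix z assume z: "z \<in> {s..x2}"
    then have "- H z \<le> m" using smax[of z] s unfolding m_def by auto
    then show "- (k * m) \<le> Q' z - Q z" using dlow[of z m] z s x3 x2 mpos by auto
  qed
  then have "- (k * m) * (x2 - s) \<le> H s - H x2" using Hrep[of s x2] sT s by (simp add: algebra_simps)
  then have "m \<le> (k * m) * (x2 - s)" using x2 unfolding m_def by simp
  also have "\<dots> \<le> (k * m) * \<delta>" using x3 s kpos mpos by (intro mult_left_mono) auto
  also have "\<dots> = m / 2" using \<delta> by (simp add: field_simps)
  finally show False using mpos by simp
qed

lemma part2: assumes x: "x \<in> \<Theta>" shows "H x = 0"
proof (cases "x = tlo")
  case False
  then show ?thesis using part2_inner x by simp
next
  case True
  show ?thesis
  proof (rule ccontr)
    assume "H x \<noteq> 0"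
    then have neg: "H tlo < 0" using part0 True by simp
    have t: "tlo \<in> \<Theta>" using tlohi by simp
    obtain d where d: "d > 0" "\<And>y. y \<in> \<Theta> \<Longrightarrow> dist y tlo < d \<Longrightarrow> dist (H y) (H tlo) < - H tlo"
      using Hcont t neg unfolding continuous_on_iff by (metis neg_0_less_iff_less)
    define y where "y = min thi (tlo + d / 2)"
    have y: "y \<in> \<Theta>" "tlo < y" "dist y tlo < d" using d tlohi unfolding y_def dist_real_def by auto
    have "dist (H y) (H tlo) < - H tlo" using d(2) y by auto
    then have "H y < 0" unfolding dist_real_def by auto
    then show False using part2_inner y by simp
  qed
qed

end

context SMD begin

lemma ueq: "x \<in> \<Theta> \<Longrightarrow> u' x = u x" using part2[of x] unfolding H_def by simp

lemma TS_rel: "y > 0 \<Longrightarrow> TS P c t y = TS Pn c t y + V Df y"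
  using VDf[of y] unfolding TS_def by simp

lemma contra: False
proof -
  obtain t where t: "t \<in> \<Theta>" and st: "Phi' t - (1 - \<alpha>) * u' t > Phi t - (1 - \<alpha>) * u t"
    by (rule strictpt)
  have ph: "Phi' t > Phi t" using st ueq[OF t] by simp
  have tt: "tlo < t" using t ph part0(1) by (cases "t = tlo") auto
  have ic: "\<forall>x\<in>\<Theta>. u x \<ge> u t + (t - x) * (q' t * r' t)"
  proof
    fix x assume x: "x \<in> \<Theta>"
    have "u' x \<ge> u' t + (t - x) * Q' t" using icQ' x t by blast
    then show "u x \<ge> u t + (t - x) * (q' t * r' t)" using ueq x t unfolding Q'_def by simp
  qed
  have goal: "dominates Pn c \<alpha> \<Theta> M (r, q, u) \<Longrightarrow> False" for M using notdom by blast
  show False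
  proof (cases "Q' t \<le> Q t")
    case True
    have Qtpos: "Q t > 0"
    proof (rule ccontr)
      assume "\<not> Q t > 0"
      then have "Q t = 0" using Qnn[OF t] by simp
      then have "Q' t = 0" "r t = 0" using True Q'nn[OF t] Qpos[OF t] rq[OF t] Q1[OF t] by auto
      then have "r' t = 0" using mech'[OF t] unfolding Q'_def by auto
      then show False using ph \<open>r t = 0\<close> unfolding Phi'_def Phi_def by simp
    qed
    then have r1: "r t = 1" by (rule Qpos[OF t])
    define z where "z = q t"
    have z: "0 < z" "z \<le> q0" "Q t = z" using Q1[OF t r1] rq[OF t] r1 Q_lt_q0[OF t tt] unfolding z_def by auto
    have Dz: "V Df z \<ge> 0" using D_nonneg z by auto
    have Phi: "Phi t = TS Pn c t z + V Df z" using TS_rel[of z] r1 z unfolding Phi_def z_def by simp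
    have gt: "r' t * TS Pn c t (q' t) > r t * TS Pn c t (q t)"
    proof (cases "r' t = 0")
      case True
      then have "Phi' t = 0" unfolding Phi'_def by simp
      then show ?thesis using ph Phi Dz True r1 unfolding z_def by simp
    next
      case False
      define \<rho> where "\<rho> = r' t"
      define y where "y = q' t"
      have \<rho>: "0 < \<rho>" "\<rho> \<le> 1" using mech'[OF t] False unfolding \<rho>_def by auto
      have y: "y > 0" using mech'[OF t] False unfolding y_def by auto
      have Phi': "Phi' t = \<rho> * TS Pn c t y + \<rho> * V Df y"
        using TS_rel[OF y] unfolding Phi'_def \<rho>_def y_def by (simp add: algebra_simps)
      have ryz: "\<rho> * y \<le> z" using True z unfolding Q'_def \<rho>_def y_def by (simp add: mult.commute)
      have key2: "\<rho> * V Df y \<le> V Df z"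
      proof (cases "y \<le> z")
        case True
        have "V Df y \<ge> 0" using D_nonneg[of y] y True z by auto
        then have "\<rho> * V Df y \<le> 1 * V Df y" using \<rho> by (intro mult_right_mono) auto
        then have "\<rho> * V Df y \<le> V Df y" by simp
        also have "V Df y \<le> V Df z"
        proof -
          have "(z - y) * Df z \<le> V Df z - V Df y" using V_bounds(1)[OF contDf mDf, of y z] y True by auto
          moreover have "0 \<le> (z - y) * Df z" using Df_nonneg[of z] z True by simp
          ultimately show ?thesis by linarith
        qed
        finally show ?thesis .
      next
        case False
        have a: "V Df y - V Df z \<le> (y - z) * Df z" using V_bounds(2)[OF contDf mDf, of z y] z False by auto
        have b: "V Df z \<ge> z * Df z" using D_lower z by auto
        have "z * (y - z) * Df z \<le> (y - z) * V Df z"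
        proof -
          have "(y - z) * (z * Df z) \<le> (y - z) * V Df z" using b False by (intro mult_left_mono) auto
          then show ?thesis by (simp add: algebra_simps)
        qed
        moreover have "z * V Df y \<le> z * V Df z + z * ((y - z) * Df z)"
        proof -
          have "z * (V Df y - V Df z) \<le> z * ((y - z) * Df z)" using a z by (intro mult_left_mono) auto
          then show ?thesis by (simp add: algebra_simps)
        qed
        ultimately have c: "z * V Df y \<le> y * V Df z" by (simp add: algebra_simps)
        have "z * (\<rho> * V Df y) = \<rho> * (z * V Df y)" by (simp add: algebra_simps)
        also have "\<dots> \<le> \<rho> * (y * V Df z)" using c \<rho> by (intro mult_left_mono) auto
        also have "\<dots> = (\<rho> * y) * V Df z" by (simp add: algebra_simps)
        also have "\<dots> \<le> z * V Df z" using ryz Dz by (intro mult_right_mono) auto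
        finally show ?thesis using z by simp
      qed
      have "\<rho> * TS Pn c t y > TS Pn c t z" using ph Phi Phi' key2 by linarith
      then show ?thesis using r1 unfolding \<rho>_def y_def z_def by simp
    qed
    have "dominates Pn c \<alpha> \<Theta> (r(t:=r' t), q(t:=q' t), u) (r, q, u)"
      by (rule splice[OF adm t _ _ _ _ ic gt]) (use mech'[OF t] in auto)
    then show False by (rule goal)
  next
    case False
    then have lt: "Q t < Q' t" by simp
    have PnQ': "Pn (Q' t) \<ge> t"
    proof (rule eps_aux[of "t - tlo"])
      show "0 < t - tlo" using tt by simp
      fix h assume h: "0 < h" "h \<le> t - tlo"
      define xh where "xh = t - h"
      have xh: "xh \<in> \<Theta>" "xh \<le> t" using h t unfolding xh_def by auto
      have "u' xh \<ge> u' t + (t - xh) * Q' t" using icQ' xh t by blast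
      moreover have "u t \<ge> u xh + (xh - t) * Q xh" using icQ xh t by blast
      ultimately have "h * Q' t \<le> h * Q xh" using ueq[OF xh(1)] ueq[OF t] unfolding xh_def by (simp add: algebra_simps)
      then have le: "Q' t \<le> Q xh" using h by simp
      have "Q xh > 0" using le lt Qnn[OF t] by linarith
      then have r1: "r xh = 1" by (rule Qpos[OF xh(1)])
      have "Pn (q xh) \<ge> xh" using C1[OF xh(1) r1] .
      moreover have "Pn (q xh) \<le> Pn (Q' t)" using mPn'[of "Q' t" "q xh"] le Q1[OF xh(1) r1] Q'nn[OF t] by simp
      ultimately show "Pn (Q' t) \<ge> t - h" unfolding xh_def by simp
    qed
    define y where "y = Q' t"
    have y: "y > 0" using lt Qnn[OF t] unfolding y_def by simp
    show False
    proof (cases "Q t > 0")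
      case True
      then have r1: "r t = 1" by (rule Qpos[OF t])
      define z where "z = q t"
      have z: "0 < z" "z < y" using Q1[OF t r1] rq[OF t] r1 lt unfolding z_def y_def by auto
      have "(y - z) * Pn y < V Pn y - V Pn z" using V_strict(1)[OF contPn mPn, of z y] z by auto
      moreover have "(y - z) * t \<le> (y - z) * Pn y" using PnQ' z unfolding y_def by (intro mult_left_mono) auto
      ultimately have "1 * TS Pn c t y > r t * TS Pn c t (q t)"
        using z y r1 unfolding TS_def z_def[symmetric] by (simp add: algebra_simps)
      moreover have ic1: "\<forall>x\<in>\<Theta>. u x \<ge> u t + (t - x) * (y * 1)" using ic unfolding y_def Q'_def by simp
      ultimately have "dominates Pn c \<alpha> \<Theta> (r(t:=1), q(t:=y), u) (r, q, u)"
        using splice[OF adm t, of 1 y] y by auto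
      then show False by (rule goal)
    next
      case False
      then have r0: "r t = 0" using Qnn[OF t] Q1[OF t] rq[OF t] by force
      obtain qa where qa: "qa > 0" "Pn qa = thi" "V Pn qa - c - thi * qa > 0" by (rule A2_wit[OF iPn A2Pn])
      define b where "b = max y qa"
      define a where "a = y / b"
      have b: "b > 0" "b \<ge> qa" "b \<ge> y" unfolding b_def using qa by auto
      have a: "0 < a" "a \<le> 1" "b * a = y" unfolding a_def using b y by (auto simp: field_simps)
      have Vb: "V Pn b - t * b \<ge> V Pn qa - t * qa"
      proof (cases "b = qa")
        case False
        then have bq: "qa < b" "b = y" using b unfolding b_def by auto
        have "(b - qa) * Pn b \<le> V Pn b - V Pn qa" using V_bounds(1)[OF contPn mPn, of qa b] bq qa by auto
        moreover have "(b - qa) * t \<le> (b - qa) * Pn b" using PnQ' bq unfolding y_def by (intro mult_left_mono) auto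
        ultimately show ?thesis by (simp add: algebra_simps)
      qed simp
      have "t * qa \<le> thi * qa" using t qa by (intro mult_right_mono) auto
      then have "V Pn b - c - t * b > 0" using Vb qa(3) by linarith
      then have "TS Pn c t b > 0" using b unfolding TS_def by simp
      then have gt: "a * TS Pn c t b > r t * TS Pn c t (q t)" using a r0 by simp
      have ic2: "\<forall>x\<in>\<Theta>. u x \<ge> u t + (t - x) * (b * a)" using ic a unfolding y_def Q'_def by simp
      have "dominates Pn c \<alpha> \<Theta> (r(t:=a), q(t:=b), u) (r, q, u)"
        by (rule splice[OF adm t _ _ _ _ ic2 gt]) (use a b in auto)
      then show False by (rule goal)
    qed
  qed
qed

end

theorem proposition5:
  fixes P Pn :: "real \<Rightarrow> real" and c \<alpha> tlo thi :: real
  assumes "0 < tlo" and "tlo < thi" and "c > 0"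
    and "0 \<le> \<alpha>" and "\<alpha> < 1"
    and "inv_demand P" and "inv_demand Pn"
    and "A2 P c thi" and "A2 Pn c thi"
    and "\<And>q q'. 0 \<le> q' \<Longrightarrow> q' < q \<Longrightarrow> P q - Pn q < P q' - Pn q'"
    and "Pn (Pinv P tlo) = tlo"
  shows "Dset Pn c \<alpha> {tlo..thi} \<subseteq> Dset P c \<alpha> {tlo..thi}"
proof
  fix M assume MD: "M \<in> Dset Pn c \<alpha> {tlo..thi}"
  obtain r q u where M: "M = (r, q, u)" by (cases M) auto
  have det: "deterministic {tlo..thi} (r, q, u)" and und: "undominated Pn c \<alpha> {tlo..thi} (r, q, u)"
    using MD M unfolding Dset_def by auto
  interpret SM P Pn c \<alpha> tlo thi r q u
    by (unfold_locales) (use assms det und in auto)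
  have "\<not> dominates P c \<alpha> {tlo..thi} M' (r, q, u)" for M'
  proof
    assume d: "dominates P c \<alpha> {tlo..thi} M' (r, q, u)"
    obtain r' q' u' where M': "M' = (r', q', u')" by (cases M') auto
    interpret SMD P Pn c \<alpha> tlo thi r q u r' q' u'
      by (unfold_locales) (use d M' in auto)
    show False by (rule contra)
  qed
  then have "undominated P c \<alpha> {tlo..thi} (r, q, u)"
    using adm unfolding undominated_def by blast
  then show "M \<in> Dset P c \<alpha> {tlo..thi}" using det M unfolding Dset_def by auto
qed

end
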